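(* Let $1\le p_0,p_1\le\infty$, let $\varphi$ be an admissible function, and let $\mu$ be an arbitrary measure on a measure space $\mathcal M$. Then for every $\mu$-measurable function $f$ and every $t>0$, $$ \big(R_{p_0,p_1,\varphi}(f^*_\mu)\big)^{**}(t)=R_{p_0,p_1,\varphi}(f^{**}_\mu)(t). $$
   Context: A function $\varphi:[1,\infty]\to[1,\infty]$ is admissible if $\varphi(1)=1$, $\varphi$ is log-concave on $[1,\infty)$, and there exist $\gamma,\beta>0$ with $\gamma/x\le\varphi'(x)/\varphi(x)\le\beta/x$ for all $x\ge1$. For a $\mu$-measurable $f$, the distribution function is $\lambda^\mu_f(y)=\mu(\{x:|f(x)|>y\})$, the decreasing rearrangement is $f^*_\mu(t)=\inf\{y>0:\lambda^\mu_f(y)\le t\}$, and $f^{**}_\mu(t)=\frac1t\int_0^t f^*_\mu(s)\,ds$, $t>0$. For a measurable function $g$ on $(0,\infty)$ (Lebesgue measure), $g^*$ and $g^{**}(t)=\frac1t\int_0^t g^*(s)\,ds$ are defined in the same way. For a positive measurable function $g$ on $(0,\infty)$ and $t>0$ (with $1/\infty=0$): $P_{p_0,\varphi}g(t)=t^{-1/p_0}\int_0^t\varphi\big(1-\log\frac st\big)g(s)\,\frac{ds}{s^{1-1/p_0}}$, $Q_{p_1}g(t)=t^{-1/p_1}\int_t^\infty g(s)\,\frac{ds}{s^{1-1/p_1}}$, and $R_{p_0,p_1,\varphi}g=P_{p_0,\varphi}g+Q_{p_1}g$. *)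

theory Defs
  imports "HOL-Analysis.Analysis"
begin

text \<open>Admissible functions. Only the values on the real half-line [1,\<infinity>) are relevant
(the argument 1 - log(s/t) of phi in the operator P is finite for s>0).\<close>
definition admissible :: "(real \<Rightarrow> real) \<Rightarrow> bool" where
  "admissible \<phi> \<longleftrightarrow>
     \<phi> 1 = 1 \<and> (\<forall>x\<ge>1. 1 \<le> \<phi> x) \<and>
     concave_on {1..} (\<lambda>x. ln (\<phi> x)) \<and>
     (\<exists>\<gamma> \<beta> \<phi>'. \<gamma> > 0 \<and> \<beta> > 0 \<and>
        (\<forall>x\<ge>1. (\<phi> has_real_derivative \<phi>' x) (at x within {1..}) \<and>
                 \<gamma> / x \<le> \<phi>' x / \<phi> x \<and> \<phi>' x / \<phi> x \<le> \<beta> / x))"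

definition distribution_fn :: "'a measure \<Rightarrow> ('a \<Rightarrow> ennreal) \<Rightarrow> real \<Rightarrow> ennreal" where
  "distribution_fn M g y = emeasure M {x \<in> space M. ennreal y < g x}"

text \<open>Decreasing rearrangement: inf {y > 0. lambda(y) \<le> t}; inf of the empty set is \<infinity>.\<close>
definition rearrangement :: "'a measure \<Rightarrow> ('a \<Rightarrow> ennreal) \<Rightarrow> real \<Rightarrow> ennreal" where
  "rearrangement M g t = (INF y \<in> {y. 0 < y \<and> distribution_fn M g y \<le> ennreal t}. ennreal y)"

definition double_star :: "'a measure \<Rightarrow> ('a \<Rightarrow> ennreal) \<Rightarrow> real \<Rightarrow> ennreal" where
  "double_star M g t = ennreal (1 / t) * (\<integral>\<^sup>+ s \<in> {0<..<t}. rearrangement M g s \<partial>lborel)"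

definition half_line :: "real measure" where
  "half_line = restrict_space lborel {0<..}"

text \<open>1/p for p \<in> [1,\<infinity>], with 1/\<infinity> = 0.\<close>
definition inv_exp :: "ereal \<Rightarrow> real" where
  "inv_exp p = real_of_ereal (inverse p)"

definition P_op :: "ereal \<Rightarrow> (real \<Rightarrow> real) \<Rightarrow> (real \<Rightarrow> ennreal) \<Rightarrow> real \<Rightarrow> ennreal" where
  "P_op p0 \<phi> g t = ennreal (t powr (- inv_exp p0)) *
     (\<integral>\<^sup>+ s \<in> {0<..<t}. ennreal (\<phi> (1 - ln (s / t)) * s powr (inv_exp p0 - 1)) * g s \<partial>lborel)"

definition Q_op :: "ereal \<Rightarrow> (real \<Rightarrow> ennreal) \<Rightarrow> real \<Rightarrow> ennreal" where
  "Q_op p1 g t = ennreal (t powr (- inv_exp p1)) *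
     (\<integral>\<^sup>+ s \<in> {t<..}. ennreal (s powr (inv_exp p1 - 1)) * g s \<partial>lborel)"

definition R_op :: "ereal \<Rightarrow> ereal \<Rightarrow> (real \<Rightarrow> real) \<Rightarrow> (real \<Rightarrow> ennreal) \<Rightarrow> real \<Rightarrow> ennreal" where
  "R_op p0 p1 \<phi> g t = P_op p0 \<phi> g t + Q_op p1 g t"

end

theory Submission imports Defs begin


lemma antimono_borel:
  fixes h :: "real \<Rightarrow> ennreal"
  assumes "\<And>x y. x \<le> y \<Longrightarrow> h y \<le> h x"
  shows "h \<in> borel_measurable borel"
proof (rule borel_measurableI_greater)
  fix y
  have "is_interval {x. y < h x}"
    unfolding is_interval_1 using assms by (auto intro: less_le_trans)
  then show "{x \<in> space borel. y < h x} \<in> sets borel"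
    using real_interval_borel_measurable by simp
qed

definition ext :: "(real \<Rightarrow> ennreal) \<Rightarrow> real \<Rightarrow> ennreal" where
  "ext h s = (if 0 < s then h s else top)"

definition antipos :: "(real \<Rightarrow> ennreal) \<Rightarrow> bool" where
  "antipos h \<longleftrightarrow> (\<forall>x y. 0 < x \<longrightarrow> x \<le> y \<longrightarrow> h y \<le> h x)"

lemma ext_borel: "antipos h \<Longrightarrow> ext h \<in> borel_measurable borel"
  by (rule antimono_borel) (auto simp: ext_def antipos_def)

lemma scale:
  fixes f :: "real \<Rightarrow> ennreal"
  assumes [measurable]: "f \<in> borel_measurable borel" and c: "c > 0"
  shows "(\<integral>\<^sup>+x. f (c * x) \<partial>lborel) = ennreal (1/c) * (\<integral>\<^sup>+x. f x \<partial>lborel)"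
proof -
  have "(\<integral>\<^sup>+x. f x \<partial>lborel) = ennreal c * (\<integral>\<^sup>+x. f (0 + c * x) \<partial>lborel)"
    using nn_integral_real_affine[of f c 0] c by simp
  then have "ennreal (1/c) * (\<integral>\<^sup>+x. f x \<partial>lborel) = (ennreal (1/c) * ennreal c) * (\<integral>\<^sup>+x. f (c * x) \<partial>lborel)"
    by (simp add: mult.assoc)
  also have "ennreal (1/c) * ennreal c = 1" using c by (simp add: ennreal_mult'[symmetric])
  finally show ?thesis by simp
qed


definition T :: "(real \<Rightarrow> ennreal) \<Rightarrow> (real \<Rightarrow> ennreal) \<Rightarrow> real \<Rightarrow> ennreal" where
  "T k g t = (\<integral>\<^sup>+u. k u * g (t * u) \<partial>lborel)"

definition avg :: "(real \<Rightarrow> ennreal) \<Rightarrow> real \<Rightarrow> ennreal" where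
  "avg g s = ennreal (1 / s) * (\<integral>\<^sup>+ r \<in> {0<..<s}. g r \<partial>lborel)"

lemma ext_pos[simp]: "0 < s \<Longrightarrow> ext g s = g s" by (simp add: ext_def)

lemma T_antipos:
  assumes "\<And>u. u \<le> 0 \<Longrightarrow> k u = 0" "antipos g"
  shows "antipos (T k g)"
  unfolding antipos_def T_def
proof (intro allI impI)
  fix x y :: real assume xy: "0 < x" "x \<le> y"
  show "(\<integral>\<^sup>+u. k u * g (y * u) \<partial>lborel) \<le> (\<integral>\<^sup>+u. k u * g (x * u) \<partial>lborel)"
  proof (rule nn_integral_mono)
    fix u
    show "k u * g (y * u) \<le> k u * g (x * u)"
    proof (cases "u \<le> 0")
      case True then show ?thesis using assms(1) by simp
    next
      case False
      then have "g (y * u) \<le> g (x * u)" using assms(2) xy unfolding antipos_def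
        by (simp add: mult_right_mono)
      then show ?thesis by (simp add: mult_left_mono)
    qed
  qed
qed

lemma inner:
  assumes g: "antipos g" and u: "u > 0" and t: "t > 0"
  shows "(\<integral>\<^sup>+v. ext g (u * v) * indicator {0<..<t} v \<partial>lborel)
       = ennreal (1/u) * (\<integral>\<^sup>+w \<in> {0<..<t*u}. g w \<partial>lborel)"
proof -
  have [measurable]: "ext g \<in> borel_measurable borel" using ext_borel[OF g] .
  define f where "f w = ext g w * indicator {0<..<t*u} w" for w
  have fm: "f \<in> borel_measurable borel" unfolding f_def by measurable
  have "(\<integral>\<^sup>+v. ext g (u * v) * indicator {0<..<t} v \<partial>lborel) = (\<integral>\<^sup>+v. f (u * v) \<partial>lborel)"
    apply (rule nn_integral_cong)
    using u by (auto simp: f_def indicator_def mult.commute zero_less_mult_iff)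
  also have "\<dots> = ennreal (1/u) * (\<integral>\<^sup>+w. f w \<partial>lborel)"
    by (rule scale[OF fm u])
  also have "(\<integral>\<^sup>+w. f w \<partial>lborel) = (\<integral>\<^sup>+w \<in> {0<..<t*u}. g w \<partial>lborel)"
    by (rule nn_integral_cong) (auto simp: f_def indicator_def)
  finally show ?thesis .
qed

lemma avg_T:
  assumes g: "antipos g" and s: "s > 0"
  shows "avg g s = T (indicator {0<..<1}) g s"
proof -
  have "T (indicator {0<..<1}) g s = (\<integral>\<^sup>+v. ext g (s * v) * indicator {0<..<1} v \<partial>lborel)"
    unfolding T_def
    apply (rule nn_integral_cong)
    using s by (auto simp: indicator_def)
  also have "\<dots> = avg g s" using inner[OF g s, of 1] by (simp add: avg_def)
  finally show ?thesis by simp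
qed

lemma avg_antipos:
  assumes g: "antipos g" shows "antipos (avg g)"
proof -
  have "antipos (T (indicator {0<..<1}) g)" by (rule T_antipos) (auto simp: g)
  then show ?thesis using avg_T[OF g] unfolding antipos_def by (metis less_le_trans)
qed

lemma T_avg:
  assumes k[measurable]: "k \<in> borel_measurable borel" and k0: "\<And>u. u \<le> 0 \<Longrightarrow> k u = 0"
    and g: "antipos g" and t: "t > 0"
  shows "ennreal (1/t) * (\<integral>\<^sup>+v \<in> {0<..<t}. T k g v \<partial>lborel) = T k (avg g) t"
proof -
  have [measurable]: "ext g \<in> borel_measurable borel" using ext_borel[OF g] .
  have "(\<integral>\<^sup>+v \<in> {0<..<t}. T k g v \<partial>lborel)
      = (\<integral>\<^sup>+v. \<integral>\<^sup>+u. k u * ext g (v * u) * indicator {0<..<t} v \<partial>lborel \<partial>lborel)"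
  proof (rule nn_integral_cong)
    fix v
    show "T k g v * indicator {0<..<t} v = (\<integral>\<^sup>+u. k u * ext g (v * u) * indicator {0<..<t} v \<partial>lborel)"
    proof (cases "v \<in> {0<..<t}")
      case True
      then show ?thesis unfolding T_def
        apply simp
        apply (rule nn_integral_cong)
        using k0 by (case_tac "x \<le> 0") auto
    qed simp
  qed
  also have "\<dots> = (\<integral>\<^sup>+u. \<integral>\<^sup>+v. k u * ext g (v * u) * indicator {0<..<t} v \<partial>lborel \<partial>lborel)"
    by (rule lborel_pair.Fubini') measurable
  also have "\<dots> = (\<integral>\<^sup>+u. k u * (\<integral>\<^sup>+v. ext g (u * v) * indicator {0<..<t} v \<partial>lborel) \<partial>lborel)"
    apply (rule nn_integral_cong)
    apply (subst nn_integral_cmult[symmetric])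
     apply measurable
    by (rule nn_integral_cong) (simp add: ac_simps)
  finally have eq: "(\<integral>\<^sup>+v \<in> {0<..<t}. T k g v \<partial>lborel) = 
       (\<integral>\<^sup>+u. k u * (\<integral>\<^sup>+v. ext g (u * v) * indicator {0<..<t} v \<partial>lborel) \<partial>lborel)" .
  have "ennreal (1/t) * (\<integral>\<^sup>+v \<in> {0<..<t}. T k g v \<partial>lborel)
     = (\<integral>\<^sup>+u. ennreal (1/t) * (k u * (\<integral>\<^sup>+v. ext g (u * v) * indicator {0<..<t} v \<partial>lborel)) \<partial>lborel)"
    unfolding eq by (rule nn_integral_cmult[symmetric]) measurable
  also have "\<dots> = T k (avg g) t"
    unfolding T_def
  proof (rule nn_integral_cong)
    fix u
    show "ennreal (1/t) * (k u * (\<integral>\<^sup>+v. ext g (u * v) * indicator {0<..<t} v \<partial>lborel)) = k u * avg g (t * u)"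
    proof (cases "u \<le> 0")
      case True then show ?thesis using k0 by simp
    next
      case False
      then have u: "u > 0" by simp
      have "ennreal (1/t) * ennreal (1/u) = ennreal (1/(t*u))"
        using t u by (simp add: ennreal_mult'[symmetric])
      then show ?thesis using inner[OF g u t] unfolding avg_def
        by (simp add: mult.commute mult.left_commute mult.assoc del: ennreal_mult_divide_eq)
           (metis mult.assoc)
    qed
  qed
  finally show ?thesis .
qed


definition phic :: "(real \<Rightarrow> real) \<Rightarrow> real \<Rightarrow> real" where
  "phic \<phi> x = \<phi> (max x 1)"

lemma adm_cont: "admissible \<phi> \<Longrightarrow> continuous_on {1..} \<phi>"
  unfolding admissible_def by (metis DERIV_continuous_on atLeast_iff)

lemma adm_ge1: "admissible \<phi> \<Longrightarrow> 1 \<le> x \<Longrightarrow> 1 \<le> \<phi> x"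
  unfolding admissible_def by auto

lemma phic_borel: assumes "admissible \<phi>" shows "phic \<phi> \<in> borel_measurable borel"
proof -
  have "continuous_on UNIV (\<lambda>x. \<phi> (max x 1))"
    by (rule continuous_on_compose2[OF adm_cont[OF assms]]) (auto intro!: continuous_intros)
  then show ?thesis unfolding phic_def[abs_def] by (rule borel_measurable_continuous_onI)
qed

definition KP :: "ereal \<Rightarrow> (real \<Rightarrow> real) \<Rightarrow> real \<Rightarrow> ennreal" where
  "KP p0 \<phi> u = indicator {0<..<1} u * ennreal (phic \<phi> (1 - ln u) * u powr (inv_exp p0 - 1))"

definition KQ :: "ereal \<Rightarrow> real \<Rightarrow> ennreal" where
  "KQ p1 u = indicator {1<..} u * ennreal (u powr (inv_exp p1 - 1))"

lemma KP_borel: assumes "admissible \<phi>" shows "KP p0 \<phi> \<in> borel_measurable borel"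
proof -
  have [measurable]: "phic \<phi> \<in> borel_measurable borel" by (rule phic_borel[OF assms])
  show ?thesis unfolding KP_def[abs_def] by measurable
qed

lemma KQ_borel: "KQ p1 \<in> borel_measurable borel"
  unfolding KQ_def[abs_def] by measurable

lemma KP0: "u \<le> 0 \<Longrightarrow> KP p0 \<phi> u = 0" by (simp add: KP_def)
lemma KQ0: "u \<le> 0 \<Longrightarrow> KQ p1 u = 0" by (simp add: KQ_def)

lemma powr_cancel: "(t::real) > 0 \<Longrightarrow> t powr (- a) * (t * t powr (a - 1)) = 1"
proof -
  assume t: "t > 0"
  have "t * t powr (a - 1) = t powr a" using t by (simp add: powr_diff)
  then show ?thesis using t by (simp add: powr_minus)
qed

lemma P_T:
  assumes adm: "admissible \<phi>" and g: "antipos g" and t: "t > 0"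
  shows "P_op p0 \<phi> g t = T (KP p0 \<phi>) g t"
proof -
  define a where "a = inv_exp p0"
  have [measurable]: "phic \<phi> \<in> borel_measurable borel" by (rule phic_borel[OF adm])
  have [measurable]: "ext g \<in> borel_measurable borel" using ext_borel[OF g] .
  define F where "F s = ennreal (phic \<phi> (1 - ln (s / t)) * s powr (a - 1)) * ext g s * indicator {0<..<t} s" for s
  have Fm: "F \<in> borel_measurable borel" unfolding F_def by measurable
  have "(\<integral>\<^sup>+ s \<in> {0<..<t}. ennreal (\<phi> (1 - ln (s / t)) * s powr (a - 1)) * g s \<partial>lborel)
     = (\<integral>\<^sup>+ s. F s \<partial>lborel)"
  proof (rule nn_integral_cong)
    fix s
    show "ennreal (\<phi> (1 - ln (s / t)) * s powr (a - 1)) * g s * indicator {0<..<t} s = F s"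
    proof (cases "s \<in> {0<..<t}")
      case True
      then have "ln (s / t) < 0" using t by (simp add: ln_less_zero_iff)  
      then show ?thesis using True by (simp add: F_def phic_def)
    qed (simp add: F_def)
  qed
  also have "\<dots> = ennreal t * (\<integral>\<^sup>+ u. F (0 + t * u) \<partial>lborel)"
    using nn_integral_real_affine[OF Fm, of t 0] t by simp
  also have "(\<integral>\<^sup>+ u. F (0 + t * u) \<partial>lborel) = (\<integral>\<^sup>+ u. ennreal (t powr (a - 1)) * (KP p0 \<phi> u * ext g (t * u)) \<partial>lborel)"
  proof (rule nn_integral_cong)
    fix u
    show "F (0 + t * u) = ennreal (t powr (a - 1)) * (KP p0 \<phi> u * ext g (t * u))"
    proof (cases "u \<in> {0<..<1}")
      case True
      then have u: "0 < u" "u < 1" by auto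
      have l: "ln (t * u / t) = ln u" using t by simp
      have pm: "(t * u) powr (a - 1) = t powr (a - 1) * u powr (a - 1)" using t u by (simp add: powr_mult)
      have ph: "phic \<phi> (1 - ln u) \<ge> 1" unfolding phic_def by (rule adm_ge1[OF adm]) simp
      have "ennreal (phic \<phi> (1 - ln u) * (t powr (a - 1) * u powr (a - 1)))
          = ennreal (t powr (a - 1)) * ennreal (phic \<phi> (1 - ln u) * u powr (a - 1))"
        using ph by (simp add: ennreal_mult[symmetric] ac_simps)
      then show ?thesis using True t u l pm by (simp add: F_def KP_def a_def mult.assoc)
    next
      case False
      then have "\<not> (0 < t * u \<and> t * u < t)" using t
        by (auto simp: zero_less_mult_iff)
      then show ?thesis using False by (simp add: F_def KP_def)
    qed
  qed
  also have "\<dots> = ennreal (t powr (a - 1)) * (\<integral>\<^sup>+ u. KP p0 \<phi> u * ext g (t * u) \<partial>lborel)"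
    by (rule nn_integral_cmult) (measurable, rule KP_borel[OF adm], measurable)
  also have "(\<integral>\<^sup>+ u. KP p0 \<phi> u * ext g (t * u) \<partial>lborel) = T (KP p0 \<phi>) g t"
    unfolding T_def
    apply (rule nn_integral_cong)
    using t by (case_tac "x \<le> 0") (auto simp: KP0)
  finally have eq: "(\<integral>\<^sup>+ s \<in> {0<..<t}. ennreal (\<phi> (1 - ln (s / t)) * s powr (a - 1)) * g s \<partial>lborel)
     = ennreal t * (ennreal (t powr (a - 1)) * T (KP p0 \<phi>) g t)" .
  have "P_op p0 \<phi> g t = ennreal (t powr (- a)) * (ennreal t * (ennreal (t powr (a - 1)) * T (KP p0 \<phi>) g t))"
    unfolding P_op_def a_def[symmetric] eq ..
  also have "\<dots> = ennreal (t powr (- a) * (t * t powr (a - 1))) * T (KP p0 \<phi>) g t"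
    using t by (simp add: ennreal_mult mult.assoc)
  also have "\<dots> = T (KP p0 \<phi>) g t" using powr_cancel[OF t] by simp
  finally show ?thesis .
qed


lemma Q_T:
  assumes g: "antipos g" and t: "t > 0"
  shows "Q_op p1 g t = T (KQ p1) g t"
proof -
  define a where "a = inv_exp p1"
  have [measurable]: "ext g \<in> borel_measurable borel" using ext_borel[OF g] .
  define F where "F s = ennreal (s powr (a - 1)) * ext g s * indicator {t<..} s" for s
  have Fm: "F \<in> borel_measurable borel" unfolding F_def by measurable
  have "(\<integral>\<^sup>+ s \<in> {t<..}. ennreal (s powr (a - 1)) * g s \<partial>lborel)
     = (\<integral>\<^sup>+ s. F s \<partial>lborel)"
    apply (rule nn_integral_cong)
    using t by (auto simp: F_def indicator_def)
  also have "\<dots> = ennreal t * (\<integral>\<^sup>+ u. F (0 + t * u) \<partial>lborel)"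
    using nn_integral_real_affine[OF Fm, of t 0] t by simp
  also have "(\<integral>\<^sup>+ u. F (0 + t * u) \<partial>lborel) = (\<integral>\<^sup>+ u. ennreal (t powr (a - 1)) * (KQ p1 u * ext g (t * u)) \<partial>lborel)"
  proof (rule nn_integral_cong)
    fix u
    show "F (0 + t * u) = ennreal (t powr (a - 1)) * (KQ p1 u * ext g (t * u))"
    proof (cases "u \<in> {1<..}")
      case True
      then have u: "1 < u" by auto
      have tu: "t < t * u" using t u by simp
      have pm: "(t * u) powr (a - 1) = t powr (a - 1) * u powr (a - 1)" using t u by (simp add: powr_mult)
      have "ennreal (t powr (a - 1) * u powr (a - 1))
          = ennreal (t powr (a - 1)) * ennreal (u powr (a - 1))"
        by (simp add: ennreal_mult[symmetric])
      then show ?thesis using True t u tu pm by (simp add: F_def KQ_def a_def mult.assoc)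
    next
      case False
      then have "\<not> (t < t * u)" using t by auto
      then show ?thesis using False by (simp add: F_def KQ_def)
    qed
  qed
  also have "\<dots> = ennreal (t powr (a - 1)) * (\<integral>\<^sup>+ u. KQ p1 u * ext g (t * u) \<partial>lborel)"
    by (rule nn_integral_cmult) (measurable, rule KQ_borel, measurable)
  also have "(\<integral>\<^sup>+ u. KQ p1 u * ext g (t * u) \<partial>lborel) = T (KQ p1) g t"
    unfolding T_def
    apply (rule nn_integral_cong)
    using t by (case_tac "x \<le> 0") (auto simp: KQ0)
  finally have eq: "(\<integral>\<^sup>+ s \<in> {t<..}. ennreal (s powr (a - 1)) * g s \<partial>lborel)
     = ennreal t * (ennreal (t powr (a - 1)) * T (KQ p1) g t)" .
  have "Q_op p1 g t = ennreal (t powr (- a)) * (ennreal t * (ennreal (t powr (a - 1)) * T (KQ p1) g t))"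
    unfolding Q_op_def a_def[symmetric] eq ..
  also have "\<dots> = ennreal (t powr (- a) * (t * t powr (a - 1))) * T (KQ p1) g t"
    using t by (simp add: ennreal_mult mult.assoc)
  also have "\<dots> = T (KQ p1) g t" using powr_cancel[OF t] by simp
  finally show ?thesis .
qed


lemma space_half_line[simp]: "space half_line = {0<..}"
  by (simp add: half_line_def space_restrict_space)

lemma emeasure_half_line: "A \<subseteq> {0<..} \<Longrightarrow> emeasure half_line A = emeasure lborel A"
  unfolding half_line_def by (rule emeasure_restrict_space) auto

lemma ext_half_line: "antipos h \<Longrightarrow> ext h \<in> borel_measurable half_line"
  unfolding half_line_def
  by (rule measurable_restrict_space1) (simp add: ext_borel measurable_lborel1)

lemma D1:
  assumes h: "antipos h" and s: "s > 0"
  shows "rearrangement half_line h s \<le> h s"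
proof -
  have key: "rearrangement half_line h s \<le> ennreal y" if y: "0 < y" "h s \<le> ennreal y" for y
  proof -
    have sub: "{x \<in> space half_line. ennreal y < h x} \<subseteq> {0<..<s}"
    proof
      fix x assume x: "x \<in> {x \<in> space half_line. ennreal y < h x}"
      have "x < s"
      proof (rule ccontr)
        assume "\<not> x < s"
        then have "h x \<le> h s" using h s unfolding antipos_def by auto
        then show False using x y by auto
      qed
      then show "x \<in> {0<..<s}" using x by auto
    qed
    have "distribution_fn half_line h y = emeasure lborel {x \<in> space half_line. ennreal y < h x}"
      unfolding distribution_fn_def by (rule emeasure_half_line) auto
    also have "\<dots> \<le> emeasure lborel {0<..<s}" by (rule emeasure_mono[OF sub]) simp
    also have "\<dots> = ennreal s" using s by simp
    finally have "distribution_fn half_line h y \<le> ennreal s" .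
    then show ?thesis unfolding rearrangement_def using y by (auto intro!: INF_lower2)
  qed
  show ?thesis
  proof (cases "h s" rule: ennreal_cases)
    case (real r)
    show ?thesis
    proof (rule ennreal_le_epsilon)
      fix e :: real assume e: "0 < e"
      have "rearrangement half_line h s \<le> ennreal (r + e)"
        using real e by (intro key) auto
      then show "rearrangement half_line h s \<le> h s + ennreal e"
        using real e by (simp add: ennreal_plus)
    qed
  qed simp
qed

lemma D2:
  assumes h: "antipos h" and s: "s > 0" "s < s'"
  shows "h s' \<le> rearrangement half_line h s"
  unfolding rearrangement_def
proof (rule INF_greatest)
  fix y assume "y \<in> {y. 0 < y \<and> distribution_fn half_line h y \<le> ennreal s}"
  then have y: "0 < y" "distribution_fn half_line h y \<le> ennreal s" by auto
  show "h s' \<le> ennreal y"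
  proof (rule ccontr)
    assume "\<not> h s' \<le> ennreal y"
    then have lt: "ennreal y < h s'" by simp
    have [measurable]: "ext h \<in> borel_measurable half_line" by (rule ext_half_line[OF h])
    have eqA: "{x \<in> space half_line. ennreal y < h x} = {x \<in> space half_line. ennreal y < ext h x}"
      by auto
    have Am: "{x \<in> space half_line. ennreal y < h x} \<in> sets half_line"
      unfolding eqA by measurable
    have sub: "{0<..s'} \<subseteq> {x \<in> space half_line. ennreal y < h x}"
    proof
      fix x assume x: "x \<in> {0<..s'}"
      then have "h s' \<le> h x" using h unfolding antipos_def by auto
      then show "x \<in> {x \<in> space half_line. ennreal y < h x}" using x lt by auto
    qed
    have "ennreal s' = emeasure half_line {0<..s'}"
      using s by (subst emeasure_half_line) auto
    also have "\<dots> \<le> distribution_fn half_line h y"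
      unfolding distribution_fn_def by (rule emeasure_mono[OF sub Am])
    also have "\<dots> \<le> ennreal s" by (rule y)
    finally show False using s by simp
  qed
qed

lemma ennreal_scale_le:
  fixes X Y :: ennreal
  assumes "\<And>c::real. c > 1 \<Longrightarrow> ennreal (1/c) * X \<le> Y"
  shows "X \<le> Y"
proof (cases X rule: ennreal_cases)
  case top
  then show ?thesis using assms[of 2] by (simp add: ennreal_mult_top)
next
  case (real x)
  show ?thesis
  proof (cases Y rule: ennreal_cases)
    case (real y)
    have "x \<le> y"
    proof (rule field_le_mult_one_interval)
      fix z :: real assume z: "0 < z" "z < 1"
      have "ennreal (1 / (1/z)) * X \<le> Y" using z by (intro assms) (simp add: field_simps)
      then have "ennreal (z * x) \<le> ennreal y" using z \<open>X = ennreal x\<close> real \<open>0 \<le> x\<close>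
        by (simp add: ennreal_mult)
      then show "z * x \<le> y" using real by (simp add: ennreal_le_iff)
    qed
    then show ?thesis using real \<open>X = ennreal x\<close> by simp
  qed simp
qed

lemma D3:
  assumes h: "antipos h" and t: "t > 0"
  shows "(\<integral>\<^sup>+ s \<in> {0<..<t}. rearrangement half_line h s \<partial>lborel) = (\<integral>\<^sup>+ s \<in> {0<..<t}. h s \<partial>lborel)"
proof (rule antisym)
  show "(\<integral>\<^sup>+ s \<in> {0<..<t}. rearrangement half_line h s \<partial>lborel) \<le> (\<integral>\<^sup>+ s \<in> {0<..<t}. h s \<partial>lborel)"
    by (rule nn_integral_mono) (auto simp: indicator_def intro!: D1[OF h])
next
  show "(\<integral>\<^sup>+ s \<in> {0<..<t}. h s \<partial>lborel) \<le> (\<integral>\<^sup>+ s \<in> {0<..<t}. rearrangement half_line h s \<partial>lborel)"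
  proof (rule ennreal_scale_le)
    fix c :: real assume c: "c > 1"
    have "ennreal (1/c) * (\<integral>\<^sup>+ s \<in> {0<..<t}. h s \<partial>lborel) \<le> ennreal (1/c) * (\<integral>\<^sup>+ s \<in> {0<..<t*c}. h s \<partial>lborel)"
      apply (rule mult_left_mono)
       apply (rule nn_integral_mono)
      using t c less_trans[of _ t "t*c"] by (auto simp: indicator_def)
    also have "\<dots> = (\<integral>\<^sup>+v. ext h (c * v) * indicator {0<..<t} v \<partial>lborel)"
      using inner[OF h _ t, of c] c by simp
    also have "\<dots> \<le> (\<integral>\<^sup>+ s \<in> {0<..<t}. rearrangement half_line h s \<partial>lborel)"
    proof (rule nn_integral_mono)
      fix v
      show "ext h (c * v) * indicator {0<..<t} v \<le> rearrangement half_line h v * indicator {0<..<t} v"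
      proof (cases "v \<in> {0<..<t}")
        case True
        then have "0 < v" "v < c * v" "0 < c * v" using c by auto
        then show ?thesis using True D2[OF h \<open>0 < v\<close> \<open>v < c * v\<close>] by simp
      qed simp
    qed
    finally show "ennreal (1/c) * (\<integral>\<^sup>+ s \<in> {0<..<t}. h s \<partial>lborel) \<le> (\<integral>\<^sup>+ s \<in> {0<..<t}. rearrangement half_line h s \<partial>lborel)" .
  qed
qed


lemma ind_meas: assumes "antipos H" shows "(\<lambda>s. H s * indicator {0<..<t} s) \<in> borel_measurable borel"
proof -
  have [measurable]: "ext H \<in> borel_measurable borel" by (rule ext_borel[OF assms])
  have "(\<lambda>s. H s * indicator {0<..<t} s) = (\<lambda>s. ext H s * indicator {0<..<t} s)"
    by (auto simp: indicator_def fun_eq_iff)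
  then show ?thesis by simp
qed

lemma rearr_antipos: "antipos (rearrangement M G)"
  unfolding antipos_def rearrangement_def
  by (auto intro!: INF_superset_mono intro: order_trans)

theorem mainTheorem2:
  fixes p0 p1 :: ereal and \<phi> :: "real \<Rightarrow> real" and M :: "'a measure"
    and f :: "'a \<Rightarrow> real" and t :: real
  assumes "1 \<le> p0" and "1 \<le> p1"
    and "admissible \<phi>"
    and "f \<in> borel_measurable M"
    and "t > 0"
  shows "double_star half_line (R_op p0 p1 \<phi> (rearrangement M (\<lambda>x. ennreal \<bar>f x\<bar>))) t
         = R_op p0 p1 \<phi> (double_star M (\<lambda>x. ennreal \<bar>f x\<bar>)) t"
proof -
  note adm = assms(3) and t = assms(5)
  define g where "g = rearrangement M (\<lambda>x. ennreal \<bar>f x\<bar>)"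
  have g: "antipos g" unfolding g_def by (rule rearr_antipos)
  have dsg: "double_star M (\<lambda>x. ennreal \<bar>f x\<bar>) = avg g"
    by (auto simp: fun_eq_iff double_star_def avg_def g_def)
  have ag: "antipos (avg g)" by (rule avg_antipos[OF g])
  define h where "h = R_op p0 p1 \<phi> g"
  have hT: "h s = T (KP p0 \<phi>) g s + T (KQ p1) g s" if "s > 0" for s
    unfolding h_def R_op_def using P_T[OF adm g that] Q_T[OF g that] by simp
  have aP: "antipos (T (KP p0 \<phi>) g)" by (rule T_antipos[OF _ g]) (simp add: KP0)
  have aQ: "antipos (T (KQ p1) g)" by (rule T_antipos[OF _ g]) (simp add: KQ0)
  have h: "antipos h" unfolding antipos_def
  proof (intro allI impI)
    fix x y :: real assume xy: "0 < x" "x \<le> y"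
    then show "h y \<le> h x" using hT[of x] hT[of y] aP aQ unfolding antipos_def
      by (auto intro!: add_mono)
  qed
  have "double_star half_line h t = ennreal (1/t) * (\<integral>\<^sup>+ s \<in> {0<..<t}. h s \<partial>lborel)"
    unfolding double_star_def using D3[OF h t] by simp
  also have "(\<integral>\<^sup>+ s \<in> {0<..<t}. h s \<partial>lborel)
     = (\<integral>\<^sup>+ s. T (KP p0 \<phi>) g s * indicator {0<..<t} s + T (KQ p1) g s * indicator {0<..<t} s \<partial>lborel)"
    by (rule nn_integral_cong) (auto simp: indicator_def hT)
  also have "\<dots> = (\<integral>\<^sup>+ s \<in> {0<..<t}. T (KP p0 \<phi>) g s \<partial>lborel) + (\<integral>\<^sup>+ s \<in> {0<..<t}. T (KQ p1) g s \<partial>lborel)"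
    by (rule nn_integral_add) (auto intro: ind_meas[OF aP] ind_meas[OF aQ])
  also have "ennreal (1/t) * \<dots> = T (KP p0 \<phi>) (avg g) t + T (KQ p1) (avg g) t"
    by (simp add: distrib_left T_avg[OF KP_borel[OF adm] KP0 g t] T_avg[OF KQ_borel KQ0 g t])
  also have "\<dots> = R_op p0 p1 \<phi> (avg g) t"
    unfolding R_op_def using P_T[OF adm ag t] Q_T[OF ag t] by simp
  finally show ?thesis unfolding h_def g_def dsg[unfolded g_def] .
qed

end
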